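(* Let $f$ be in Model-2 (defined below) and assume $Z_\pm\in\mathbb{R}$. Then $\beta_2^{\min}\le 0\le\min\{Y_-,R_0,\lambda\}\le\beta_2^{\max}\le\beta_2^{hi}$. If moreover $Y_-\le R_0\le Z_+$, $Y_-\le\lambda\le Z_+$ and $Z_+>0$, then $[0,Y_-]\subset\mathcal{B}_f^-$ and $[\beta_1^{lo},Z_+]=\mathcal{B}_f^+$; hence $f$ is admissible.
   Context: Model-2: $f(X,I)=\sum_{i,j=0}^2f_{ij}X^iI^j$ with real coefficients satisfying $f_{20}=f_{22}=0$, $f_{21}=-\kappa<0$, $f_{02}\le0$, $f_{10}\le0$, $f_{11}+f_{12}\le0$, $f_{00}\ge0$, $\lambda:=f_{00}+f_{01}+f_{02}\ge0$, and $f_{12}=-\kappa Y_-$ where $Y_-:=\frac12\big(-(f_{11}+f_{12})-\sqrt{(f_{11}+f_{12})^2+4f_{02}}\big)$ is real. Thus $f=f_0(I)+f_1(I)X+f_2(I)X^2$ with $f_0=f_{00}+f_{01}I+f_{02}I^2$, $f_1=f_{10}+f_{11}I+f_{12}I^2$, $f_2=f_{21}I$. Put $P_f(I):=(f_0(I)-\lambda I)/(1-I)=f_{00}-f_{02}I$, $h_f(z,I):=P_f(I)+zf_1(I)+z^2(I+(1-I)f_2(I))$, $\mathcal{B}_f^+:=\{z\ge\lambda:h_f(z,I)\le0\ \forall I\in[0,1]\}$, $\mathcal{B}_f^-:=\{z\le\lambda:h_f(z,I)\ge0\ \forall I\in[0,1]\}$. A pair $(\beta_1,\beta_2)$, $\beta_1>\beta_2$,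 is $f$-compatible if $\beta_2\le\lambda\le\beta_1$ and $h_f(\beta_i,I)/(\beta_j-\beta_i)\ge0$ for all $I\in[0,1]$, $\{i,j\}=\{1,2\}$; $f$ is admissible if such a pair exists. $R_0:=-f_{00}/f_{10}$ (undefined if $f_{10}=0$), $Z_\pm:=\frac12\big(-(f_{10}+f_{11}+f_{12})\pm\sqrt{(f_{10}+f_{11}+f_{12})^2+4(f_{02}-f_{00})}\big)$, $\beta_1^{lo}:=\max\{\lambda,R_0,Z_-\}$, $\beta_2^{hi}:=\min\{\lambda,R_0,Z_-\}$. For $s\in\{+,-,0\}$ let $\mathcal{I}_s:=\{I\in[0,1]:\operatorname{sign}(I+(1-I)f_2(I))=s\}$ and $Z_-(I)\le Z_+(I)$ the zeros of $h_f(\cdot,I)$; $\mathcal{Z}_-:=\{Z_-(I):I\in\mathcal{I}_-\}$, $\mathcal{Z}_0:=\{Z_-(I):I\in\mathcal{I}_+\}\cup\{Z_+(I):I\in\mathcal{I}_-\}\cup\{-P_f(I)/f_1(I):I\in\mathcal{I}_0,f_1(I)<0\}$; $\beta_2^{\max}:=\inf(\{\lambda\}\cup\mathcal{Z}_0)$, $\beta_2^{\min}:=\sup\mathcal{Z}_-$ if $\mathcal{Z}_-\ne\emptyset$, else $-\infty$. *)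

theory Defs
  imports "HOL-Analysis.Analysis" "HOL-Library.Extended_Real"
begin

text \<open>A Model-2 function f(X,I) = sum_{i,j=0..2} f_ij X^i I^j is represented by its
  coefficient function  c :: nat => nat => real,  c i j = f_ij (only i,j <= 2 matter).\<close>

definition kappa :: "(nat \<Rightarrow> nat \<Rightarrow> real) \<Rightarrow> real" where
  "kappa c = - c 2 1"

definition lam :: "(nat \<Rightarrow> nat \<Rightarrow> real) \<Rightarrow> real" where
  "lam c = c 0 0 + c 0 1 + c 0 2"

definition Ym :: "(nat \<Rightarrow> nat \<Rightarrow> real) \<Rightarrow> real" where
  "Ym c = (- (c 1 1 + c 1 2) - sqrt ((c 1 1 + c 1 2)^2 + 4 * c 0 2)) / 2"

definition model2 :: "(nat \<Rightarrow> nat \<Rightarrow> real) \<Rightarrow> bool" where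
  "model2 c \<longleftrightarrow> c 2 0 = 0 \<and> c 2 2 = 0 \<and> c 2 1 < 0 \<and> c 0 2 \<le> 0 \<and> c 1 0 \<le> 0
     \<and> c 1 1 + c 1 2 \<le> 0 \<and> c 0 0 \<ge> 0 \<and> lam c \<ge> 0
     \<and> (c 1 1 + c 1 2)^2 + 4 * c 0 2 \<ge> 0
     \<and> c 1 2 = - kappa c * Ym c"

definition f0 :: "(nat \<Rightarrow> nat \<Rightarrow> real) \<Rightarrow> real \<Rightarrow> real" where
  "f0 c I = c 0 0 + c 0 1 * I + c 0 2 * I^2"
definition f1 :: "(nat \<Rightarrow> nat \<Rightarrow> real) \<Rightarrow> real \<Rightarrow> real" where
  "f1 c I = c 1 0 + c 1 1 * I + c 1 2 * I^2"
definition f2 :: "(nat \<Rightarrow> nat \<Rightarrow> real) \<Rightarrow> real \<Rightarrow> real" where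
  "f2 c I = c 2 1 * I"

text \<open>P_f(I) := (f_0(I) - lambda I)/(1-I) = f_00 - f_02 I (polynomial identity; we use the
  polynomial form, which is also the value at I = 1).\<close>
definition Pf :: "(nat \<Rightarrow> nat \<Rightarrow> real) \<Rightarrow> real \<Rightarrow> real" where
  "Pf c I = c 0 0 - c 0 2 * I"

definition lc :: "(nat \<Rightarrow> nat \<Rightarrow> real) \<Rightarrow> real \<Rightarrow> real" where
  "lc c I = I + (1 - I) * f2 c I"

definition hf :: "(nat \<Rightarrow> nat \<Rightarrow> real) \<Rightarrow> real \<Rightarrow> real \<Rightarrow> real" where
  "hf c z I = Pf c I + z * f1 c I + z^2 * lc c I"

definition Bplus :: "(nat \<Rightarrow> nat \<Rightarrow> real) \<Rightarrow> real set" where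
  "Bplus c = {z. z \<ge> lam c \<and> (\<forall>I\<in>{0..1}. hf c z I \<le> 0)}"
definition Bminus :: "(nat \<Rightarrow> nat \<Rightarrow> real) \<Rightarrow> real set" where
  "Bminus c = {z. z \<le> lam c \<and> (\<forall>I\<in>{0..1}. hf c z I \<ge> 0)}"

definition compatible :: "(nat \<Rightarrow> nat \<Rightarrow> real) \<Rightarrow> real \<Rightarrow> real \<Rightarrow> bool" where
  "compatible c b1 b2 \<longleftrightarrow> b1 > b2 \<and> b2 \<le> lam c \<and> lam c \<le> b1 \<and>
     (\<forall>I\<in>{0..1}. hf c b1 I / (b2 - b1) \<ge> 0 \<and> hf c b2 I / (b1 - b2) \<ge> 0)"

definition admissible :: "(nat \<Rightarrow> nat \<Rightarrow> real) \<Rightarrow> bool" where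
  "admissible c \<longleftrightarrow> (\<exists>b1 b2. compatible c b1 b2)"

text \<open>R_0 = -f_00/f_10; when f_10 = 0 it is undefined and we use the convention R_0 = +infinity
  (the limit as f_10 -> 0-, since f_00 >= 0).\<close>
definition R0 :: "(nat \<Rightarrow> nat \<Rightarrow> real) \<Rightarrow> ereal" where
  "R0 c = (if c 1 0 = 0 then \<infinity> else ereal (- c 0 0 / c 1 0))"

definition Zdisc :: "(nat \<Rightarrow> nat \<Rightarrow> real) \<Rightarrow> real" where
  "Zdisc c = (c 1 0 + c 1 1 + c 1 2)^2 + 4 * (c 0 2 - c 0 0)"
definition Zp :: "(nat \<Rightarrow> nat \<Rightarrow> real) \<Rightarrow> real" where
  "Zp c = (- (c 1 0 + c 1 1 + c 1 2) + sqrt (Zdisc c)) / 2"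
definition Zm :: "(nat \<Rightarrow> nat \<Rightarrow> real) \<Rightarrow> real" where
  "Zm c = (- (c 1 0 + c 1 1 + c 1 2) - sqrt (Zdisc c)) / 2"

definition beta1lo :: "(nat \<Rightarrow> nat \<Rightarrow> real) \<Rightarrow> ereal" where
  "beta1lo c = max (ereal (lam c)) (max (R0 c) (ereal (Zm c)))"
definition beta2hi :: "(nat \<Rightarrow> nat \<Rightarrow> real) \<Rightarrow> ereal" where
  "beta2hi c = min (ereal (lam c)) (min (R0 c) (ereal (Zm c)))"

definition is_small_zero :: "(nat \<Rightarrow> nat \<Rightarrow> real) \<Rightarrow> real \<Rightarrow> real \<Rightarrow> bool" where
  "is_small_zero c I z \<longleftrightarrow> hf c z I = 0 \<and> (\<forall>w. hf c w I = 0 \<longrightarrow> z \<le> w)"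
definition is_large_zero :: "(nat \<Rightarrow> nat \<Rightarrow> real) \<Rightarrow> real \<Rightarrow> real \<Rightarrow> bool" where
  "is_large_zero c I z \<longleftrightarrow> hf c z I = 0 \<and> (\<forall>w. hf c w I = 0 \<longrightarrow> w \<le> z)"

definition ZsetM :: "(nat \<Rightarrow> nat \<Rightarrow> real) \<Rightarrow> real set" where
  "ZsetM c = {z. \<exists>I\<in>{0..1}. lc c I < 0 \<and> is_small_zero c I z}"

definition Zset0 :: "(nat \<Rightarrow> nat \<Rightarrow> real) \<Rightarrow> real set" where
  "Zset0 c = {z. \<exists>I\<in>{0..1}. lc c I > 0 \<and> is_small_zero c I z}
           \<union> {z. \<exists>I\<in>{0..1}. lc c I < 0 \<and> is_large_zero c I z}
           \<union> {z. \<exists>I\<in>{0..1}. lc c I = 0 \<and> f1 c I < 0 \<and> z = - Pf c I / f1 c I}"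

definition beta2max :: "(nat \<Rightarrow> nat \<Rightarrow> real) \<Rightarrow> ereal" where
  "beta2max c = Inf (ereal ` ({lam c} \<union> Zset0 c))"

text \<open>Sup of the empty set of ereals is -infinity, matching the convention.\<close>
definition beta2min :: "(nat \<Rightarrow> nat \<Rightarrow> real) \<Rightarrow> ereal" where
  "beta2min c = Sup (ereal ` ZsetM c)"

end

theory Submission
  imports Defs
begin


lemma quad_fact: fixes s d q z :: real assumes "q^2 = s^2 + 4*d"
  shows "z^2 + s*z - d = (z - (-s-q)/2)*(z - (-s+q)/2)"
proof -
  have "(z - (-s-q)/2)*(z - (-s+q)/2) = z^2 + s*z + (s^2 - q^2)/4"
    by (simp add: field_simps power2_eq_square)
  then show ?thesis using assms by simp
qed
lemma root_gen: fixes A B C q w :: real assumes "A \<noteq> 0" "q^2 = B^2 - 4*A*C" "w = (-B + q)/(2*A) \<or> w = (-B - q)/(2*A)"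
  shows "C + B*w + A*w^2 = 0"
proof -
  have "4*A*(C + B*w + A*w^2) = (2*A*w + B)^2 - (B^2 - 4*A*C)" by (simp add: algebra_simps power2_eq_square)
  moreover have "2*A*w + B = q \<or> 2*A*w + B = -q" using assms(1,3) by (auto simp: field_simps)
  ultimately have "4*A*(C + B*w + A*w^2) = 0" using assms(2) by auto
  then show ?thesis using assms(1) by simp
qed

lemma hf_expand: "hf c z I = (c 0 0 + z * c 1 0) + I * (z^2 + (c 1 1 + c 1 2) * z - c 0 2) + I*(1-I)*z*(c 2 1 * z - c 1 2)"
  unfolding hf_def Pf_def f1_def lc_def f2_def by (simp add: algebra_simps power2_eq_square)

lemma hf_raw: "hf c z I = Pf c I + f1 c I * z + lc c I * z^2"
  unfolding hf_def by (simp add: algebra_simps)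

definition Yp :: "(nat \<Rightarrow> nat \<Rightarrow> real) \<Rightarrow> real" where
  "Yp c = (- (c 1 1 + c 1 2) + sqrt ((c 1 1 + c 1 2)^2 + 4 * c 0 2)) / 2"

lemma m2:
  assumes "model2 c"
  shows "c 2 1 < 0" "c 0 2 \<le> 0" "c 1 0 \<le> 0" "c 1 1 + c 1 2 \<le> 0" "c 0 0 \<ge> 0" "lam c \<ge> 0"
    "c 1 2 = c 2 1 * Ym c" "Ym c \<ge> 0" "Ym c \<le> - (c 1 1 + c 1 2)" "Ym c \<le> Yp c"
    "\<And>z. z^2 + (c 1 1 + c 1 2) * z - c 0 2 = (z - Ym c) * (z - Yp c)"
proof -
  let ?s = "c 1 1 + c 1 2" and ?D = "(c 1 1 + c 1 2)^2 + 4 * c 0 2"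
  have D: "?D \<ge> 0" using assms unfolding model2_def by auto
  show "c 2 1 < 0" "c 0 2 \<le> 0" "c 1 0 \<le> 0" "?s \<le> 0" "c 0 0 \<ge> 0" "lam c \<ge> 0"
    using assms unfolding model2_def by auto
  show "c 1 2 = c 2 1 * Ym c" using assms unfolding model2_def kappa_def by auto
  have s: "?s \<le> 0" using assms unfolding model2_def by auto
  have d: "c 0 2 \<le> 0" using assms unfolding model2_def by auto
  have "sqrt ?D \<le> sqrt (?s^2)" using d by (intro real_sqrt_le_mono) auto
  also have "\<dots> = - ?s" using s by simp
  finally have sq: "sqrt ?D \<le> - ?s" .
  have sq0: "sqrt ?D \<ge> 0" using D by simp
  show "Ym c \<ge> 0" using sq unfolding Ym_def by simp
  have gen: "\<And>x y::real. x \<le> 0 \<Longrightarrow> 0 \<le> y \<Longrightarrow> (-x - y)/2 \<le> -x" by (simp add: field_simps)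
  show "Ym c \<le> - ?s" unfolding Ym_def by (rule gen[OF s sq0])
  show "Ym c \<le> Yp c" using sq0 unfolding Ym_def Yp_def by simp
  have sqq: "sqrt ?D ^ 2 = ?s^2 + 4 * c 0 2" using D by simp
  show "\<And>z. z^2 + ?s * z - c 0 2 = (z - Ym c) * (z - Yp c)"
    unfolding Ym_def Yp_def by (rule quad_fact[OF sqq])
qed

lemma hf_form:
  assumes "model2 c"
  shows "hf c z I = (c 0 0 + z * c 1 0) + I * ((z - Ym c) * (z - Yp c)) + I*(1-I)*z*(c 2 1 * (z - Ym c))"
  unfolding hf_expand m2(11)[OF assms, symmetric] m2(7)[OF assms] by (simp add: algebra_simps)

lemma hf_one: "hf c z 1 = z^2 + (c 1 0 + c 1 1 + c 1 2) * z + (c 0 0 - c 0 2)"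
  unfolding hf_expand by (simp add: algebra_simps)

lemma hf_zero: "hf c z 0 = c 0 0 + z * c 1 0"
  unfolding hf_expand by simp

lemma hf_one_fact: assumes "Zdisc c \<ge> 0" shows "hf c z 1 = (z - Zm c) * (z - Zp c)"
proof -
  have q: "sqrt (Zdisc c) ^ 2 = (c 1 0 + c 1 1 + c 1 2)^2 + 4 * (c 0 2 - c 0 0)"
    using assms unfolding Zdisc_def by simp
  show ?thesis unfolding hf_one Zm_def Zp_def using quad_fact[OF q, of z] by simp
qed

lemma Zm_le_Zp: assumes "Zdisc c \<ge> 0" shows "Zm c \<le> Zp c"
  using assms unfolding Zm_def Zp_def by simp

lemma lc_0: "lc c 0 = 0" and lc_1: "lc c 1 = 1"
  unfolding lc_def f2_def by simp_all

lemma Pf_nonneg: assumes "model2 c" "0 \<le> I" shows "Pf c I \<ge> 0"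
proof -
  have "c 0 2 * I \<le> 0" using m2(2)[OF assms(1)] assms(2) by (simp add: mult_nonpos_nonneg)
  then show ?thesis unfolding Pf_def using m2(5)[OF assms(1)] by simp
qed

lemma f1_nonpos: assumes "model2 c" "0 \<le> I" "I \<le> 1" "lc c I \<ge> 0" shows "f1 c I \<le> 0"
proof (cases "I = 0")
  case True then show ?thesis using m2(3)[OF assms(1)] unfolding f1_def by simp
next
  case False
  then have Ip: "I > 0" using assms by simp
  have lc: "lc c I = I * (1 + c 2 1 * (1 - I))" unfolding lc_def f2_def by (simp add: algebra_simps)
  have "1 + c 2 1 * (1 - I) \<ge> 0" using assms(4) Ip unfolding lc by (simp add: zero_le_mult_iff)
  then have "- c 2 1 * (1 - I) \<le> 1" by simp
  then have "Ym c * (- c 2 1 * (1 - I)) \<le> Ym c * 1"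
    using m2(8)[OF assms(1)] by (rule mult_left_mono)
  then have inner: "c 1 1 + c 1 2 + Ym c * (- c 2 1 * (1 - I)) \<le> 0"
    using m2(9)[OF assms(1)] by simp
  have f1: "f1 c I = c 1 0 + I * (c 1 1 + c 1 2 + Ym c * (- c 2 1 * (1 - I)))"
    unfolding f1_def m2(7)[OF assms(1)] by (simp add: algebra_simps power2_eq_square)
  have "I * (c 1 1 + c 1 2 + Ym c * (- c 2 1 * (1 - I))) \<le> 0"
    using Ip inner by (simp add: mult_nonneg_nonpos)
  then show ?thesis unfolding f1 using m2(3)[OF assms(1)] by simp
qed

lemma R0_le: assumes "model2 c" "ereal z \<le> R0 c" shows "c 0 0 + z * c 1 0 \<ge> 0"
proof (cases "c 1 0 = 0")
  case True then show ?thesis using m2(5)[OF assms(1)] by simp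
next
  case False
  then have e: "c 1 0 < 0" using m2(3)[OF assms(1)] by simp
  then have "z \<le> - c 0 0 / c 1 0" using assms(2) False unfolding R0_def by simp
  then show ?thesis using e by (simp add: field_simps)
qed

lemma R0_less: assumes "model2 c" "ereal z < R0 c" "c 1 0 < 0" shows "c 0 0 + z * c 1 0 > 0"
proof -
  have "z < - c 0 0 / c 1 0" using assms(2,3) unfolding R0_def by simp
  then show ?thesis using assms(3) by (simp add: field_simps)
qed

lemma R0_ge: assumes "model2 c" "R0 c \<le> ereal z" shows "c 1 0 < 0" "c 0 0 + z * c 1 0 \<le> 0"
proof -
  show e: "c 1 0 < 0" using assms(2) m2(3)[OF assms(1)] unfolding R0_def by (cases "c 1 0 = 0") auto
  then have "- c 0 0 / c 1 0 \<le> z" using assms(2) unfolding R0_def by simp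
  then show "c 0 0 + z * c 1 0 \<le> 0" using e by (simp add: field_simps)
qed

lemma hf_pos:
  assumes "model2 c" "0 \<le> z" "z < Ym c" "ereal z < R0 c" "0 \<le> I" "I \<le> 1" "0 < I \<or> c 1 0 < 0"
  shows "hf c z I > 0"
proof -
  have a: "c 0 0 + z * c 1 0 \<ge> 0" using R0_le[OF assms(1)] assms(4) by simp
  have t3: "I*(1-I)*z*(c 2 1 * (z - Ym c)) \<ge> 0"
  proof -
    have "c 2 1 * (z - Ym c) \<ge> 0" using m2(1)[OF assms(1)] assms(3) by (simp add: mult_nonpos_nonpos)
    moreover have "I*(1-I)*z \<ge> 0" using assms by simp
    ultimately show ?thesis by simp
  qed
  have yy: "(z - Ym c) * (z - Yp c) > 0" using assms(3) m2(10)[OF assms(1)] by (simp add: mult_neg_neg)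
  show ?thesis
  proof (cases "I > 0")
    case True
    then have "I * ((z - Ym c) * (z - Yp c)) > 0" using yy by simp
    then show ?thesis unfolding hf_form[OF assms(1)] using a t3 by linarith
  next
    case False
    then have "I = 0" "c 1 0 < 0" using assms by auto
    then show ?thesis using R0_less[OF assms(1,4)] by (simp add: hf_zero)
  qed
qed

lemma hf_nonneg:
  assumes "model2 c" "0 \<le> z" "z \<le> Ym c" "ereal z \<le> R0 c" "0 \<le> I" "I \<le> 1"
  shows "hf c z I \<ge> 0"
proof -
  have a: "c 0 0 + z * c 1 0 \<ge> 0" using R0_le[OF assms(1)] assms(4) by simp
  have t3: "I*(1-I)*z*(c 2 1 * (z - Ym c)) \<ge> 0"
  proof -
    have "c 2 1 * (z - Ym c) \<ge> 0" using m2(1)[OF assms(1)] assms(3) by (simp add: mult_nonpos_nonpos)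
    moreover have "I*(1-I)*z \<ge> 0" using assms by simp
    ultimately show ?thesis by simp
  qed
  have yy: "(z - Ym c) * (z - Yp c) \<ge> 0" using assms(3) m2(10)[OF assms(1)] by (simp add: mult_nonpos_nonpos)
  then have "I * ((z - Ym c) * (z - Yp c)) \<ge> 0" using assms(5) by simp
  then show ?thesis unfolding hf_form[OF assms(1)] using a t3 by linarith
qed

lemma hf_nonpos:
  assumes "model2 c" "0 \<le> z" "Ym c \<le> z" "c 0 0 + z * c 1 0 \<le> 0" "hf c z 1 \<le> 0" "0 \<le> I" "I \<le> 1"
  shows "hf c z I \<le> 0"
proof -
  have h1: "hf c z 1 = (c 0 0 + z * c 1 0) + (z - Ym c) * (z - Yp c)" using hf_form[OF assms(1), of z 1] by simp
  have eq: "hf c z I = (c 0 0 + z * c 1 0) * (1 - I) + I * hf c z 1 + I*(1-I)*z*(c 2 1 * (z - Ym c))"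
    unfolding hf_form[OF assms(1), of z I] h1 by (simp add: algebra_simps)
  have t3: "I*(1-I)*z*(c 2 1 * (z - Ym c)) \<le> 0"
  proof -
    have "c 2 1 * (z - Ym c) \<le> 0" using m2(1)[OF assms(1)] assms(3) by (simp add: mult_nonpos_nonneg)
    moreover have "I*(1-I)*z \<ge> 0" using assms by simp
    ultimately show ?thesis by (simp add: mult_nonneg_nonpos)
  qed
  have t1: "(c 0 0 + z * c 1 0) * (1 - I) \<le> 0" using assms(4,7) by (simp add: mult_nonpos_nonneg)
  have t2: "I * hf c z 1 \<le> 0" using assms(5,6) by (simp add: mult_nonneg_nonpos)
  show ?thesis unfolding eq using t1 t2 t3 by linarith
qed

lemma concave_roots:
  assumes "model2 c" "0 \<le> I" "lc c I < 0"
  defines "q \<equiv> sqrt ((f1 c I)^2 - 4 * lc c I * Pf c I)"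
  shows "hf c ((- f1 c I + q) / (2 * lc c I)) I = 0" "(- f1 c I + q) / (2 * lc c I) \<le> 0"
        "hf c ((- f1 c I - q) / (2 * lc c I)) I = 0" "(- f1 c I - q) / (2 * lc c I) \<ge> 0"
proof -
  have P: "Pf c I \<ge> 0" by (rule Pf_nonneg[OF assms(1,2)])
  have LP: "4 * lc c I * Pf c I \<le> 0" using P assms(3)
  proof -
    have "lc c I * Pf c I \<le> 0" using P assms(3) mult_nonpos_nonneg[of "lc c I" "Pf c I"] by simp
    then show ?thesis by linarith
  qed
  then have D: "(f1 c I)^2 - 4 * lc c I * Pf c I \<ge> (f1 c I)^2" by linarith
  have D0: "(f1 c I)^2 - 4 * lc c I * Pf c I \<ge> 0" using LP zero_le_power2[of "f1 c I"] by linarith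
  then have qq: "q^2 = (f1 c I)^2 - 4 * lc c I * Pf c I" unfolding q_def by simp
  have "q \<ge> sqrt ((f1 c I)^2)" unfolding q_def using D by (rule real_sqrt_le_mono)
  then have qB: "q \<ge> \<bar>f1 c I\<bar>" by simp
  have A: "lc c I \<noteq> 0" using assms(3) by simp
  show "hf c ((- f1 c I + q) / (2 * lc c I)) I = 0"
    unfolding hf_raw by (rule root_gen[OF A qq]) simp
  show "hf c ((- f1 c I - q) / (2 * lc c I)) I = 0"
    unfolding hf_raw by (rule root_gen[OF A qq]) simp
  have "- f1 c I + q \<ge> 0" using qB by linarith
  then show "(- f1 c I + q) / (2 * lc c I) \<le> 0" using assms(3) by (simp add: divide_nonneg_neg)
  have "- f1 c I - q \<le> 0" using qB by linarith
  then show "(- f1 c I - q) / (2 * lc c I) \<ge> 0" using assms(3) by (simp add: divide_nonpos_neg)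
qed

lemma ZsetM_le: assumes "model2 c" "z \<in> ZsetM c" shows "z \<le> 0"
proof -
  obtain I where I: "0 \<le> I" "I \<le> 1" "lc c I < 0" "is_small_zero c I z"
    using assms(2) unfolding ZsetM_def by auto
  note r = concave_roots[OF assms(1) I(1,3)]
  from I(4) r(1) have "z \<le> (- f1 c I + sqrt ((f1 c I)^2 - 4 * lc c I * Pf c I)) / (2 * lc c I)"
    unfolding is_small_zero_def by blast
  with r(2) show ?thesis by linarith
qed

lemma Zset0_char: assumes "model2 c" "z \<in> Zset0 c"
  shows "\<exists>I. 0 \<le> I \<and> I \<le> 1 \<and> hf c z I = 0 \<and> 0 \<le> z \<and> (0 < I \<or> c 1 0 < 0)"
proof -
  consider (a) I where "0 \<le> I" "I \<le> 1" "lc c I > 0" "is_small_zero c I z"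
    | (b) I where "0 \<le> I" "I \<le> 1" "lc c I < 0" "is_large_zero c I z"
    | (c) I where "0 \<le> I" "I \<le> 1" "lc c I = 0" "f1 c I < 0" "z = - Pf c I / f1 c I"
    using assms(2) unfolding Zset0_def by auto
  then show ?thesis
  proof cases
    case a
    have I0: "0 < I" using a(1,3) lc_0[of c] by (cases "I = 0") auto
    have h: "hf c z I = 0" using a(4) unfolding is_small_zero_def by simp
    have "0 \<le> z"
    proof (rule ccontr)
      assume "\<not> 0 \<le> z"
      then have zn: "z < 0" by simp
      have "f1 c I \<le> 0" using f1_nonpos[OF assms(1) a(1,2)] a(3) by simp
      then have t2: "f1 c I * z \<ge> 0" using zn by (simp add: mult_nonpos_nonpos)
      have t3: "lc c I * z^2 > 0" using a(3) zn by simp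
      have "Pf c I \<ge> 0" by (rule Pf_nonneg[OF assms(1) a(1)])
      then have "hf c z I > 0" unfolding hf_raw using t2 t3 by linarith
      then show False using h by simp
    qed
    then show ?thesis using a(1,2) h I0 by blast
  next
    case b
    have I0: "0 < I" using b(1,3) lc_0[of c] by (cases "I = 0") auto
    have h: "hf c z I = 0" using b(4) unfolding is_large_zero_def by simp
    note r = concave_roots[OF assms(1) b(1,3)]
    from b(4) r(3) have "(- f1 c I - sqrt ((f1 c I)^2 - 4 * lc c I * Pf c I)) / (2 * lc c I) \<le> z"
      unfolding is_large_zero_def by blast
    with r(4) have "0 \<le> z" by linarith
    then show ?thesis using b(1,2) h I0 by blast
  next
    case c
    have h: "hf c z I = 0" unfolding hf_raw c(3,5) using c(4) by simp
    have "- Pf c I \<le> 0" using Pf_nonneg[OF assms(1) c(1)] by simp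
    then have z0: "0 \<le> z" unfolding c(5) using c(4) divide_nonpos_neg[of "- Pf c I" "f1 c I"] by simp
    have "0 < I \<or> c 1 0 < 0"
    proof (cases "I = 0")
      case True then show ?thesis using c(4) unfolding f1_def by simp
    next
      case False then show ?thesis using c(1) by simp
    qed
    then show ?thesis using c(1,2) h z0 by blast
  qed
qed


lemma R0_nonneg: assumes "model2 c" shows "0 \<le> R0 c"
proof (cases "c 1 0 = 0")
  case True then show ?thesis unfolding R0_def by simp
next
  case False
  then have "c 1 0 < 0" using m2(3)[OF assms] by simp
  then have "0 \<le> - c 0 0 / c 1 0" using m2(5)[OF assms] divide_nonpos_neg[of "- c 0 0" "c 1 0"] by simp
  then show ?thesis using False unfolding R0_def by simp
qed

lemma Zm_small: assumes "Zdisc c \<ge> 0" shows "is_small_zero c 1 (Zm c)"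
  unfolding is_small_zero_def hf_one_fact[OF assms] using Zm_le_Zp[OF assms] by auto

lemma between: assumes "Zdisc c \<ge> 0" shows "hf c z 1 \<le> 0 \<longleftrightarrow> Zm c \<le> z \<and> z \<le> Zp c"
proof -
  have le: "Zm c \<le> Zp c" by (rule Zm_le_Zp[OF assms])
  show ?thesis unfolding hf_one_fact[OF assms]
  proof
    assume h: "(z - Zm c) * (z - Zp c) \<le> 0"
    show "Zm c \<le> z \<and> z \<le> Zp c"
    proof (rule ccontr)
      assume "\<not> (Zm c \<le> z \<and> z \<le> Zp c)"
      then have "z < Zm c \<or> z > Zp c" by auto
      then have "(z - Zm c) * (z - Zp c) > 0"
        using le by (auto intro: mult_neg_neg mult_pos_pos)
      then show False using h by simp
    qed
  next
    assume "Zm c \<le> z \<and> z \<le> Zp c"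
    then show "(z - Zm c) * (z - Zp c) \<le> 0" by (simp add: mult_nonneg_nonpos)
  qed
qed

theorem proposition5p8:
  fixes c :: "nat \<Rightarrow> nat \<Rightarrow> real"
  assumes "model2 c"
    and "Zdisc c \<ge> 0"
  shows "beta2min c \<le> 0
      \<and> 0 \<le> min (ereal (Ym c)) (min (R0 c) (ereal (lam c)))
      \<and> min (ereal (Ym c)) (min (R0 c) (ereal (lam c))) \<le> beta2max c
      \<and> beta2max c \<le> beta2hi c
      \<and> (ereal (Ym c) \<le> R0 c \<and> R0 c \<le> ereal (Zp c) \<and> Ym c \<le> lam c \<and> lam c \<le> Zp c
          \<and> Zp c > 0 \<longrightarrow>
       {0..Ym c} \<subseteq> Bminus c \<and> {z. beta1lo c \<le> ereal z \<and> z \<le> Zp c} = Bplus c \<and> admissible c)"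
proof -
  note M = m2[OF assms(1)]
  define m where "m = min (ereal (Ym c)) (min (R0 c) (ereal (lam c)))"
  have P1: "beta2min c \<le> 0"
    unfolding beta2min_def using ZsetM_le[OF assms(1)] by (auto intro!: Sup_least)
  have P2: "0 \<le> m" unfolding m_def using M(6,8) R0_nonneg[OF assms(1)] by simp
  have P3: "m \<le> beta2max c"
    unfolding beta2max_def
  proof (rule Inf_greatest)
    fix x assume "x \<in> ereal ` ({lam c} \<union> Zset0 c)"
    then obtain z where x: "x = ereal z" and z: "z = lam c \<or> z \<in> Zset0 c" by auto
    show "m \<le> x"
      using z
    proof
      assume "z = lam c" then show ?thesis unfolding x m_def by (simp add: min_le_iff_disj)
    next
      assume "z \<in> Zset0 c"
      then obtain I where I: "0 \<le> I" "I \<le> 1" "hf c z I = 0" "0 \<le> z" "0 < I \<or> c 1 0 < 0"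
        using Zset0_char[OF assms(1)] by blast
      show ?thesis
      proof (rule ccontr)
        assume "\<not> m \<le> x"
        then have "ereal z < m" unfolding x by simp
        then have "z < Ym c" "ereal z < R0 c" unfolding m_def by auto
        from hf_pos[OF assms(1) I(4) this I(1,2,5)] I(3) show False by simp
      qed
    qed
  qed
  have P4: "beta2max c \<le> beta2hi c"
  proof -
    have l: "beta2max c \<le> ereal (lam c)" unfolding beta2max_def by (rule Inf_lower) simp
    have r: "beta2max c \<le> R0 c"
    proof (cases "c 1 0 = 0")
      case True then show ?thesis unfolding R0_def by simp
    next
      case False
      then have e: "c 1 0 < 0" using M(3) by simp
      have "- c 0 0 / c 1 0 \<in> Zset0 c" unfolding Zset0_def
        using e lc_0[of c] by (auto simp: f1_def Pf_def intro!: bexI[of _ 0])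
      then have "beta2max c \<le> ereal (- c 0 0 / c 1 0)" unfolding beta2max_def by (intro Inf_lower) auto
      then show ?thesis using False unfolding R0_def by simp
    qed
    have z: "beta2max c \<le> ereal (Zm c)"
    proof -
      have "Zm c \<in> Zset0 c" unfolding Zset0_def
        using Zm_small[OF assms(2)] lc_1[of c] by (auto intro!: bexI[of _ 1])
      then show ?thesis unfolding beta2max_def by (intro Inf_lower) auto
    qed
    show ?thesis unfolding beta2hi_def using l r z by simp
  qed
  have P5: "{0..Ym c} \<subseteq> Bminus c \<and> {z. beta1lo c \<le> ereal z \<and> z \<le> Zp c} = Bplus c \<and> admissible c"
    if H: "ereal (Ym c) \<le> R0 c" "R0 c \<le> ereal (Zp c)" "Ym c \<le> lam c" "lam c \<le> Zp c" "Zp c > 0"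
  proof -
    have A: "{0..Ym c} \<subseteq> Bminus c"
    proof
      fix z assume z: "z \<in> {0..Ym c}"
      then have "ereal z \<le> R0 c" using H(1) order_trans[of "ereal z" "ereal (Ym c)" "R0 c"] by simp
      then show "z \<in> Bminus c" unfolding Bminus_def using z H(3) hf_nonneg[OF assms(1)] by auto
    qed
    have Bs: "{z. beta1lo c \<le> ereal z \<and> z \<le> Zp c} = Bplus c"
    proof (intro set_eqI iffI)
      fix z assume "z \<in> {z. beta1lo c \<le> ereal z \<and> z \<le> Zp c}"
      then have z: "lam c \<le> z" "R0 c \<le> ereal z" "Zm c \<le> z" "z \<le> Zp c" unfolding beta1lo_def by auto
      have h1: "hf c z 1 \<le> 0" using between[OF assms(2)] z by simp
      have a: "c 0 0 + z * c 1 0 \<le> 0" using R0_ge(2)[OF assms(1) z(2)] .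
      show "z \<in> Bplus c" unfolding Bplus_def
        using z(1) hf_nonpos[OF assms(1) _ _ a h1] M(6) H(3) by auto
    next
      fix z assume "z \<in> Bplus c"
      then have z: "lam c \<le> z" "hf c z 0 \<le> 0" "hf c z 1 \<le> 0" unfolding Bplus_def by auto
      have zz: "Zm c \<le> z" "z \<le> Zp c" using between[OF assms(2)] z(3) by auto
      have e: "c 1 0 \<noteq> 0" using H(2) unfolding R0_def by auto
      then have e': "c 1 0 < 0" using M(3) by simp
      have "c 0 0 + z * c 1 0 \<le> 0" using z(2) by (simp add: hf_zero)
      then have "- c 0 0 / c 1 0 \<le> z" using e' by (simp add: field_simps)
      then have "R0 c \<le> ereal z" using e unfolding R0_def by simp
      then show "z \<in> {z. beta1lo c \<le> ereal z \<and> z \<le> Zp c}"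
        unfolding beta1lo_def using z(1) zz by auto
    qed
    have "Zp c \<in> Bplus c"
    proof -
      have "beta1lo c \<le> ereal (Zp c)" unfolding beta1lo_def
        using H(2,4) Zm_le_Zp[OF assms(2)] by simp
      then show ?thesis using Bs by auto
    qed
    then have hz: "\<forall>I\<in>{0..1}. hf c (Zp c) I \<le> 0" unfolding Bplus_def by auto
    have h0: "\<forall>I\<in>{0..1}. hf c 0 I \<ge> 0" using hf_nonneg[OF assms(1), of 0] M(8) R0_nonneg[OF assms(1)]
      by (simp add: zero_ereal_def)
    have "compatible c (Zp c) 0" unfolding compatible_def
      using H(4,5) M(6) hz h0 by (auto intro: divide_nonpos_pos)
    then have "admissible c" unfolding admissible_def by blast
    then show ?thesis using A Bs by blast
  qed
  show ?thesis using P1 P2 P3 P4 P5 unfolding m_def by blast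
qed

end
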